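(* Let $n\ge 2$, let $T=\{1,\dots,n\}$ and let $\mathcal T$ be a topology on $T$. Fix an integer $k\ge 1$ and let $X_{k-1}$ be the set of old points at stage $k$. For each $i\in\{1,\dots,n-1\}\setminus X_{k-1}$ let $N_i$ be the number of new open $k$-sets of the quotient space $Q^{i}$. Then there is an integer $s\ge 0$ (depending on $k$) such that $N_i\in\{s,s+1,s+2\}$ for every $i\in\{1,\dots,n-1\}\setminus X_{k-1}$.
   Context: For $\alpha\in T$, $\alpha^{*}$ denotes the smallest open set of $\mathcal T$ containing $\alpha$. For an integer $m\ge 0$, an $m$-system is an open set $P$ of $\mathcal T$ such that $P\setminus\{n\}$ has exactly $m$ points; upper if $n\notin P$, lower if $n\in P$. At stage $k$, a point $\alpha\neq n$ is old if $\alpha^{*}$ is an $m$-system for some $m<k$, and new if $\alpha^{*}$ is a $k$-system; $X_{k-1}$ is the set of old points. A $k$-system is new if it contains a point $p\neq n$ not contained in any $m$-system with $m\le k-1$. For $i\in\{1,\dots,n-1\}$, $Q^{i}$ is the quotient space obtained by identifying $i$ and $n$: its underlying set is $T(i,n)=\{\{z\}: z\in T\setminus\{i,n\}\}\cup\{\{i,n\}\}$ with natural map $f_i:T\to T(i,n)$, and a set $V\subseteq T(i,n)$ is open iff $f_i^{-1}(V)\in\mathcal T$. The spaces $Q^{i}$ with $i\notin X_{k-1}$ are called new quotient spaces (at stage $k$). A new open $k$-set of $Q^{i}$ is an open set $V$ of $Q^{i}$ with exactly $k$ elements such that $f_i^{-1}(V)$ is a new $k$-system of $\mathcal T$. *)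

theory Defs
  imports "HOL-Analysis.Analysis"
begin

definition min_open :: "nat topology \<Rightarrow> nat \<Rightarrow> nat set" where
  "min_open X a = \<Inter>{U. openin X U \<and> a \<in> U}"

definition m_system :: "nat topology \<Rightarrow> nat \<Rightarrow> nat \<Rightarrow> nat set \<Rightarrow> bool" where
  "m_system X n m P \<longleftrightarrow> openin X P \<and> card (P - {n}) = m"

definition old_points :: "nat topology \<Rightarrow> nat \<Rightarrow> nat \<Rightarrow> nat set" where
  "old_points X n k = {a \<in> topspace X. a \<noteq> n \<and> (\<exists>m<k. m_system X n m (min_open X a))}"

definition new_k_system :: "nat topology \<Rightarrow> nat \<Rightarrow> nat \<Rightarrow> nat set \<Rightarrow> bool" where
  "new_k_system X n k P \<longleftrightarrow> m_system X n k P \<and>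
     (\<exists>p\<in>P. p \<noteq> n \<and> \<not> (\<exists>m Q. m \<le> k - 1 \<and> m_system X n m Q \<and> p \<in> Q))"

text \<open>Natural map f_i : T \<rightarrow> T(i,n) identifying i and n.\<close>
definition qmap :: "nat \<Rightarrow> nat \<Rightarrow> nat \<Rightarrow> nat set" where
  "qmap n i z = (if z = i \<or> z = n then {i, n} else {z})"

definition quot_open :: "nat topology \<Rightarrow> nat \<Rightarrow> nat \<Rightarrow> nat set set \<Rightarrow> bool" where
  "quot_open X n i V \<longleftrightarrow> V \<subseteq> qmap n i ` topspace X \<and>
     openin X {z \<in> topspace X. qmap n i z \<in> V}"

definition new_open_k_sets :: "nat topology \<Rightarrow> nat \<Rightarrow> nat \<Rightarrow> nat \<Rightarrow> nat set set set" where
  "new_open_k_sets X n k i = {V. quot_open X n i V \<and> card V = k \<and>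
     new_k_system X n k {z \<in> topspace X. qmap n i z \<in> V}}"

end

theory Submission
  imports Defs
begin

lemma open_sub: "openin X P \<Longrightarrow> P \<subseteq> topspace X"
  by (simp add: openin_subset)

lemma min_open_props:
  assumes "finite (topspace X)" "a \<in> topspace X"
  shows "openin X (min_open X a)" "a \<in> min_open X a"
    "\<And>U. openin X U \<Longrightarrow> a \<in> U \<Longrightarrow> min_open X a \<subseteq> U"
proof -
  let ?F = "{U. openin X U \<and> a \<in> U}"
  have fin: "finite ?F"
    by (rule finite_subset[of _ "Pow (topspace X)"]) (auto dest: openin_subset simp: assms(1))
  have ne: "?F \<noteq> {}" using assms(2) by auto
  show "openin X (min_open X a)" unfolding min_open_def
    by (rule openin_Inter[OF fin ne]) auto
  show "a \<in> min_open X a" unfolding min_open_def by auto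
  show "\<And>U. openin X U \<Longrightarrow> a \<in> U \<Longrightarrow> min_open X a \<subseteq> U" unfolding min_open_def by auto
qed

lemma new_contains:
  assumes fin: "finite (topspace X)" and i: "i \<in> topspace X" "i \<noteq> n" "i \<notin> old_points X n k"
    and P: "new_k_system X n k P" "i \<in> P"
  shows "P - {n} = min_open X i - {n}"
proof -
  have mo: "openin X (min_open X i)" and sub: "min_open X i \<subseteq> P"
    using min_open_props[OF fin i(1)] P by (auto simp: new_k_system_def m_system_def)
  have "\<not> card (min_open X i - {n}) < k"
    using i mo unfolding old_points_def m_system_def by auto
  hence k: "k \<le> card (min_open X i - {n})" by simp
  have cP: "card (P - {n}) = k" and finP: "finite P"
    using P open_sub[of X P] fin by (auto simp: new_k_system_def m_system_def intro: finite_subset)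
  have "min_open X i - {n} \<subseteq> P - {n}" using sub by auto
  moreover have "card (P - {n}) \<le> card (min_open X i - {n})" using cP k by simp
  ultimately show ?thesis using finP by (metis card_seteq finite_Diff)
qed

lemma count_eq:
  assumes fin: "finite (topspace X)" and i: "i \<in> topspace X" "n \<in> topspace X" "i \<noteq> n"
  shows "card (new_open_k_sets X n k i) = card {P. new_k_system X n k P \<and> (i \<in> P \<longleftrightarrow> n \<in> P)}"
proof -
  define pre where "pre V = {z \<in> topspace X. qmap n i z \<in> V}" for V
  have inj: "inj_on pre (new_open_k_sets X n k i)"
  proof (rule inj_onI)
    fix V W assume V: "V \<in> new_open_k_sets X n k i" and W: "W \<in> new_open_k_sets X n k i"
      and e: "pre V = pre W"
    have "V \<subseteq> W"
    proof
      fix v assume "v \<in> V"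
      then obtain z where z: "z \<in> topspace X" "v = qmap n i z"
        using V by (auto simp: new_open_k_sets_def quot_open_def)
      hence "z \<in> pre V" using \<open>v \<in> V\<close> by (simp add: pre_def)
      hence "z \<in> pre W" using e by simp
      thus "v \<in> W" using z by (simp add: pre_def)
    qed
    moreover have "W \<subseteq> V"
    proof
      fix v assume "v \<in> W"
      then obtain z where z: "z \<in> topspace X" "v = qmap n i z"
        using W by (auto simp: new_open_k_sets_def quot_open_def)
      hence "z \<in> pre W" using \<open>v \<in> W\<close> by (simp add: pre_def)
      hence "z \<in> pre V" using e by simp
      thus "v \<in> V" using z by (simp add: pre_def)
    qed
    ultimately show "V = W" by blast
  qed
  have img: "pre ` new_open_k_sets X n k i = {P. new_k_system X n k P \<and> (i \<in> P \<longleftrightarrow> n \<in> P)}"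
  proof
    show "pre ` new_open_k_sets X n k i \<subseteq> {P. new_k_system X n k P \<and> (i \<in> P \<longleftrightarrow> n \<in> P)}"
    proof
      fix P assume "P \<in> pre ` new_open_k_sets X n k i"
      then obtain V where V: "V \<in> new_open_k_sets X n k i" "P = pre V" by blast
      have "qmap n i i = qmap n i n" by (simp add: qmap_def)
      hence "(i \<in> P \<longleftrightarrow> n \<in> P)" using V(2) i by (simp add: pre_def)
      moreover have "new_k_system X n k P" using V by (simp add: new_open_k_sets_def pre_def)
      ultimately show "P \<in> {P. new_k_system X n k P \<and> (i \<in> P \<longleftrightarrow> n \<in> P)}" by simp
    qed
    show "{P. new_k_system X n k P \<and> (i \<in> P \<longleftrightarrow> n \<in> P)} \<subseteq> pre ` new_open_k_sets X n k i"
    proof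
      fix P assume "P \<in> {P. new_k_system X n k P \<and> (i \<in> P \<longleftrightarrow> n \<in> P)}"
      hence P: "new_k_system X n k P" "i \<in> P \<longleftrightarrow> n \<in> P" by auto
      have op: "openin X P" and cP: "card (P - {n}) = k"
        using P by (auto simp: new_k_system_def m_system_def)
      have Pt: "P \<subseteq> topspace X" using open_sub[OF op] .
      have pe: "pre (qmap n i ` P) = P"
      proof (rule set_eqI)
        fix z
        show "z \<in> pre (qmap n i ` P) \<longleftrightarrow> z \<in> P"
        proof
          assume "z \<in> pre (qmap n i ` P)"
          then obtain p where p: "p \<in> P" "qmap n i z = qmap n i p" by (auto simp: pre_def)
          show "z \<in> P"
          proof (cases "z = i \<or> z = n")
            case True
            hence "p = i \<or> p = n" using p(2) \<open>i \<noteq> n\<close>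
              by (auto simp: qmap_def split: if_splits)
            thus ?thesis using True P(2) p(1) by auto
          next
            case False
            hence "p = z" using p(2) \<open>i \<noteq> n\<close>
              by (auto simp: qmap_def split: if_splits)
            thus ?thesis using p(1) by simp
          qed
        next
          assume "z \<in> P" thus "z \<in> pre (qmap n i ` P)" using Pt by (auto simp: pre_def)
        qed
      qed
      have im: "qmap n i ` P = qmap n i ` (P - {n})"
      proof
        show "qmap n i ` P \<subseteq> qmap n i ` (P - {n})"
        proof
          fix v assume "v \<in> qmap n i ` P"
          then obtain p where p: "p \<in> P" "v = qmap n i p" by blast
          show "v \<in> qmap n i ` (P - {n})"
          proof (cases "p = n")
            case True
            hence "i \<in> P" "v = qmap n i i" using P(2) p by (auto simp: qmap_def)
            thus ?thesis using \<open>i \<noteq> n\<close> by blast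
          next
            case False thus ?thesis using p by blast
          qed
        qed
      qed auto
      have "inj_on (qmap n i) (P - {n})"
        by (rule inj_onI) (auto simp: qmap_def split: if_splits)
      hence ck: "card (qmap n i ` P) = k" using im cP card_image by metis
      have "qmap n i ` P \<in> new_open_k_sets X n k i"
        unfolding new_open_k_sets_def quot_open_def
        using pe ck Pt op P(1) unfolding pre_def by auto
      thus "P \<in> pre ` new_open_k_sets X n k i" using pe by (metis image_eqI)
    qed
  qed
  show ?thesis using card_image[OF inj] img by simp
qed

theorem theorem2:
  fixes X :: "nat topology" and n k :: nat
  assumes "n \<ge> 2" and "topspace X = {1..n}" and "k \<ge> 1"
  shows "\<exists>s::nat. \<forall>i \<in> {1..n-1} - old_points X n k.
           card (new_open_k_sets X n k i) \<in> {s, s + 1, s + 2}"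
proof -
  have fin: "finite (topspace X)" using assms(2) by simp
  define A where "A = {P. new_k_system X n k P}"
  have finA: "finite A"
    by (rule finite_subset[of _ "Pow (topspace X)"])
       (auto simp: A_def new_k_system_def m_system_def fin dest: openin_subset)
  define C where "C = {P \<in> A. n \<notin> P}"
  have finC: "finite C" using finA by (simp add: C_def)
  show ?thesis
  proof (intro exI[of _ "card C - 1"] ballI)
    fix i assume iI: "i \<in> {1..n-1} - old_points X n k"
    have it: "i \<in> topspace X" "n \<in> topspace X" "i \<noteq> n" "i \<notin> old_points X n k"
      using iI assms by auto
    define D where "D = {P \<in> A. i \<in> P \<and> n \<in> P}"
    define E where "E = {P \<in> C. i \<in> P}"
    have S: "{P. new_k_system X n k P \<and> (i \<in> P \<longleftrightarrow> n \<in> P)} = D \<union> (C - E)"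
      by (auto simp: A_def C_def D_def E_def)
    have D1: "D \<subseteq> {insert n (min_open X i - {n})}"
    proof
      fix P assume "P \<in> D"
      hence P: "new_k_system X n k P" "i \<in> P" "n \<in> P" by (auto simp: D_def A_def)
      have "P - {n} = min_open X i - {n}" using new_contains[OF fin it(1,3,4) P(1,2)] .
      hence "P = insert n (min_open X i - {n})" using P(3) by blast
      thus "P \<in> {insert n (min_open X i - {n})}" by simp
    qed
    have E1: "E \<subseteq> {min_open X i - {n}}"
    proof
      fix P assume "P \<in> E"
      hence P: "new_k_system X n k P" "i \<in> P" "n \<notin> P" by (auto simp: E_def C_def A_def)
      have "P - {n} = min_open X i - {n}" using new_contains[OF fin it(1,3,4) P(1,2)] .
      hence "P = min_open X i - {n}" using P(3) by simp
      thus "P \<in> {min_open X i - {n}}" by simp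
    qed
    have cD: "card D \<le> 1" using card_mono[OF _ D1] by simp
    have cE: "card E \<le> 1" using card_mono[OF _ E1] by simp
    have EC: "E \<subseteq> C" by (auto simp: E_def)
    have finD: "finite D" using finite_subset[OF D1] by simp
    have disj: "D \<inter> (C - E) = {}" by (auto simp: D_def C_def)
    have "card (D \<union> (C - E)) = card D + card (C - E)"
      using card_Un_disjoint[OF finD _ disj] finC by simp
    moreover have "card (C - E) = card C - card E"
      using card_Diff_subset[OF finite_subset[OF EC finC] EC] .
    moreover have "card E \<le> card C" using card_mono[OF finC EC] .
    ultimately have eq: "card (new_open_k_sets X n k i) = card D + (card C - card E)"
      using count_eq[OF fin it(1-3), of k] S by simp
    show "card (new_open_k_sets X n k i) \<in> {card C - 1, card C - 1 + 1, card C - 1 + 2}"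
      using eq cD cE \<open>card E \<le> card C\<close> by auto
  qed
qed

end
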